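(* For every integer $g\geq 3$ there exists a fragile graph that is cubic ($3$-regular) and has girth $g$; in particular, for every $g$ there is a fragile graph of girth $g$ that is not $2$-degenerate.
   Context: All graphs are finite and simple. A graph is $k$-connected if it has at least $k+1$ vertices and no vertex cutset with at most $k-1$ vertices. A graph is fragile if it has no $3$-connected subgraph. A graph is $2$-degenerate if every non-null subgraph has a vertex of degree at most $2$. *)

theory Defs
  imports Main
begin

definition graph :: "'a set \<Rightarrow> 'a set set \<Rightarrow> bool" where
  "graph V E \<longleftrightarrow> finite V \<and> (\<forall>e\<in>E. \<exists>u v. e = {u, v} \<and> u \<noteq> v \<and> u \<in> V \<and> v \<in> V)"

definition subgraph :: "'a set \<Rightarrow> 'a set set \<Rightarrow> 'a set \<Rightarrow> 'a set set \<Rightarrow> bool" where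
  "subgraph V' E' V E \<longleftrightarrow> V' \<subseteq> V \<and> E' \<subseteq> E \<and> graph V' E'"

definition degree :: "'a set set \<Rightarrow> 'a \<Rightarrow> nat" where
  "degree E v = card {e \<in> E. v \<in> e}"

definition adj :: "'a set set \<Rightarrow> 'a \<Rightarrow> 'a \<Rightarrow> bool" where
  "adj E u v \<longleftrightarrow> {u, v} \<in> E"

definition connected :: "'a set \<Rightarrow> 'a set set \<Rightarrow> bool" where
  "connected V E \<longleftrightarrow> V \<noteq> {} \<and>
     (\<forall>u\<in>V. \<forall>v\<in>V. (u, v) \<in> {(x, y). x \<in> V \<and> y \<in> V \<and> adj E x y}\<^sup>*)"

definition del_verts_E :: "'a set set \<Rightarrow> 'a set \<Rightarrow> 'a set set" where
  "del_verts_E E S = {e \<in> E. e \<inter> S = {}}"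

definition vertex_cutset :: "'a set \<Rightarrow> 'a set set \<Rightarrow> 'a set \<Rightarrow> bool" where
  "vertex_cutset V E S \<longleftrightarrow> S \<subseteq> V \<and> \<not> connected (V - S) (del_verts_E E S)"

definition k_connected :: "nat \<Rightarrow> 'a set \<Rightarrow> 'a set set \<Rightarrow> bool" where
  "k_connected k V E \<longleftrightarrow> card V \<ge> k + 1 \<and>
     \<not> (\<exists>S. vertex_cutset V E S \<and> card S \<le> k - 1)"

definition fragile :: "'a set \<Rightarrow> 'a set set \<Rightarrow> bool" where
  "fragile V E \<longleftrightarrow> \<not> (\<exists>V' E'. subgraph V' E' V E \<and> k_connected 3 V' E')"

definition two_degenerate :: "'a set \<Rightarrow> 'a set set \<Rightarrow> bool" where
  "two_degenerate V E \<longleftrightarrow>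
     (\<forall>V' E'. subgraph V' E' V E \<and> V' \<noteq> {} \<longrightarrow> (\<exists>v\<in>V'. degree E' v \<le> 2))"

definition cubic :: "'a set \<Rightarrow> 'a set set \<Rightarrow> bool" where
  "cubic V E \<longleftrightarrow> (\<forall>v\<in>V. degree E v = 3)"

definition has_cycle_of_length :: "'a set \<Rightarrow> 'a set set \<Rightarrow> nat \<Rightarrow> bool" where
  "has_cycle_of_length V E n \<longleftrightarrow> n \<ge> 3 \<and> (\<exists>vs. length vs = n \<and> distinct vs \<and> set vs \<subseteq> V \<and>
      (\<forall>i<n. {vs ! i, vs ! ((i + 1) mod n)} \<in> E))"

definition has_girth :: "'a set \<Rightarrow> 'a set set \<Rightarrow> nat \<Rightarrow> bool" where
  "has_girth V E g \<longleftrightarrow> has_cycle_of_length V E g \<and> (\<forall>n<g. \<not> has_cycle_of_length V E n)"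

end

theory Submission
  imports Defs "HOL-Library.Nat_Bijection"
begin


definition nbrs :: "'a set set \<Rightarrow> 'a \<Rightarrow> 'a set" where
  "nbrs E v = {u. {v,u} \<in> E}"

lemma graph_edge_ne: assumes "graph V E" "{a,b} \<in> E" shows "a \<noteq> b"
proof -
  obtain u v where eq: "{a,b} = {u,v}" and uv: "u \<noteq> v" using assms unfolding graph_def by blast
  have "u \<in> {a,b}" "v \<in> {a,b}" by (simp_all add: eq)
  then show ?thesis using uv by auto
qed

lemma graph_edge_in: assumes "graph V E" "{a,b} \<in> E" shows "a \<in> V \<and> b \<in> V"
proof -
  obtain u v where eq: "{a,b} = {u,v}" and uv: "u \<in> V" "v \<in> V" using assms unfolding graph_def by blast
  have "a \<in> {u,v}" "b \<in> {u,v}" by (simp_all add: eq[symmetric])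
  then show ?thesis using uv by auto
qed

lemma graph_edgeE: "graph V E \<Longrightarrow> e \<in> E \<Longrightarrow> (\<And>a b. e = {a,b} \<Longrightarrow> a \<noteq> b \<Longrightarrow> a \<in> V \<Longrightarrow> b \<in> V \<Longrightarrow> P) \<Longrightarrow> P"
proof -
  assume g: "graph V E" and e: "e \<in> E" and H: "\<And>a b. e = {a,b} \<Longrightarrow> a \<noteq> b \<Longrightarrow> a \<in> V \<Longrightarrow> b \<in> V \<Longrightarrow> P"
  have "\<forall>e\<in>E. \<exists>u v. e = {u, v} \<and> u \<noteq> v \<and> u \<in> V \<and> v \<in> V" using g unfolding graph_def by (rule conjunct2)
  then have "\<exists>u v. e = {u, v} \<and> u \<noteq> v \<and> u \<in> V \<and> v \<in> V" using e by (rule bspec)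
  then obtain a b where "e = {a, b}" "a \<noteq> b" "a \<in> V" "b \<in> V" by blast
  then show P by (rule H)
qed

lemma graph_finite_E: assumes "graph V E" shows "finite E"
proof (rule finite_subset[of _ "Pow V"])
  show "E \<subseteq> Pow V"
  proof
    fix e assume "e \<in> E"
    then obtain a b where "e = {a,b}" "a \<in> V" "b \<in> V" using assms graph_edgeE by metis
    then show "e \<in> Pow V" by simp
  qed
qed (use assms in \<open>simp add: graph_def\<close>)

lemma degree_nbrs:
  assumes "graph V E"
  shows "degree E v = card (nbrs E v)"
proof -
  have "{e \<in> E. v \<in> e} = (\<lambda>u. {v,u}) ` nbrs E v"
  proof
    show "{e \<in> E. v \<in> e} \<subseteq> (\<lambda>u. {v,u}) ` nbrs E v"
    proof
      fix e assume e: "e \<in> {e \<in> E. v \<in> e}"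
      then obtain a b where ab: "e = {a,b}" "a \<noteq> b" using assms graph_edgeE by blast
      show "e \<in> (\<lambda>u. {v,u}) ` nbrs E v"
      proof (cases "v = a")
        case True
        then have "b \<in> nbrs E v" using e ab by (simp add: nbrs_def)
        then show ?thesis using True ab by blast
      next
        case False then have "v = b" using e ab by auto
        then have ev: "e = {v,a}" using ab by blast
        then have "a \<in> nbrs E v" using e by (simp add: nbrs_def)
        then show ?thesis using ev by blast
      qed
    qed
  qed (auto simp: nbrs_def)
  moreover have "inj_on (\<lambda>u. {v,u}) (nbrs E v)"
  proof (rule inj_onI)
    fix u u' assume u: "u \<in> nbrs E v" and u': "u' \<in> nbrs E v" and eq: "{v,u} = {v,u'}"
    have "u \<noteq> v" "u' \<noteq> v" using u u' graph_edge_ne[OF assms] by (auto simp: nbrs_def)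
    then show "u = u'" using eq by (auto simp: doubleton_eq_iff)
  qed
  ultimately show ?thesis unfolding degree_def by (simp add: card_image)
qed

lemma graph_finite_nbrs: assumes "graph V E" shows "finite (nbrs E v)"
proof (rule finite_subset[of _ V])
  show "nbrs E v \<subseteq> V" using graph_edge_in[OF assms] by (auto simp: nbrs_def)
qed (use assms in \<open>simp add: graph_def\<close>)

lemma connectedD: assumes c: "connected V E" and u: "u \<in> V" and v: "v \<in> V"
  shows "(u, v) \<in> {(x, y). x \<in> V \<and> y \<in> V \<and> adj E x y}\<^sup>*"
proof -
  have "\<forall>u\<in>V. \<forall>v\<in>V. (u, v) \<in> {(x, y). x \<in> V \<and> y \<in> V \<and> adj E x y}\<^sup>*"
    using c unfolding connected_def by (rule conjunct2)
  then have "\<forall>v\<in>V. (u, v) \<in> {(x, y). x \<in> V \<and> y \<in> V \<and> adj E x y}\<^sup>*" using u by (rule bspec)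
  then show ?thesis using v by (rule bspec)
qed

lemma no_path_out:
  assumes "(a, b) \<in> R\<^sup>*" "a \<in> Q" "\<And>p q. (p,q) \<in> R \<Longrightarrow> p \<in> Q \<Longrightarrow> q \<in> Q"
  shows "b \<in> Q"
proof -
  from assms(1) have "a \<in> Q \<longrightarrow> b \<in> Q"
  proof (induction rule: rtrancl_induct)
    case base show ?case by simp
  next
    case (step y z)
    then show ?case using assms(3)[of y z] by simp
  qed
  then show ?thesis using assms(2) by simp
qed

lemma kconn_min_degree:
  assumes g: "graph V E" and k: "k_connected 3 V E" and v: "v \<in> V"
  shows "degree E v \<ge> 3"
proof (rule ccontr)
  assume "\<not> degree E v \<ge> 3"
  then have cN: "card (nbrs E v) \<le> 2" using degree_nbrs[OF g] by simp
  define N where "N = nbrs E v"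
  have NV: "N \<subseteq> V" using g by (auto simp: N_def nbrs_def dest: graph_edge_in)
  have fin: "finite V" using g by (simp add: graph_def)
  have c4: "card V \<ge> 4" using k by (simp add: k_connected_def)
  have vN: "v \<notin> N" using graph_edge_ne[OF g, of v v] by (auto simp: N_def nbrs_def)
  have "card (V - N) \<ge> 2" using card_Diff_subset[OF finite_subset[OF NV fin] NV] cN c4 N_def by simp
  moreover have "card (V - N - {v}) = card (V - N) - 1" using v vN by (intro card_Diff_singleton) simp
  ultimately have "card (V - N - {v}) \<ge> 1" by linarith
  then have "V - N - {v} \<noteq> {}" by (intro notI) simp
  then obtain w where w: "w \<in> V - N - {v}" by blast
  have "\<not> connected (V - N) (del_verts_E E N)"
  proof
    assume "connected (V - N) (del_verts_E E N)"
    then have "(v, w) \<in> {(x, y). x \<in> V - N \<and> y \<in> V - N \<and> adj (del_verts_E E N) x y}\<^sup>*"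
      using v vN w by (intro connectedD) auto
    moreover have "\<And>p q. (p,q) \<in> {(x, y). x \<in> V - N \<and> y \<in> V - N \<and> adj (del_verts_E E N) x y} \<Longrightarrow> p \<in> {v} \<Longrightarrow> q \<in> {v}"
      by (auto simp: adj_def del_verts_E_def N_def nbrs_def)
    ultimately have "w \<in> {v}" using no_path_out[where Q="{v}"] by blast
    then show False using w by simp
  qed
  then have vc: "vertex_cutset V E N" using NV by (simp add: vertex_cutset_def)
  have cc: "card N \<le> 3 - 1" using cN N_def by simp
  have nk: "\<not> (\<exists>S. vertex_cutset V E S \<and> card S \<le> 3 - 1)" using k unfolding k_connected_def by (rule conjunct2)
  show False by (rule notE[OF nk], rule exI[of _ "N"], rule conjI[OF vc cc])
qed

lemma fragile_crit:
  assumes g: "graph V E" and cub: "cubic V E"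
   and crit: "\<And>W. W \<subseteq> V \<Longrightarrow> W \<noteq> {} \<Longrightarrow> (\<forall>u\<in>W. \<forall>w. {u,w} \<in> E \<longrightarrow> w \<in> W) \<Longrightarrow>
        (\<exists>c\<in>W. \<exists>a\<in>W. \<exists>b\<in>W. \<exists>Q. a \<in> Q \<and> b \<notin> Q \<and> c \<notin> Q \<and> b \<noteq> c \<and> (\<forall>u\<in>Q. \<forall>w. {u,w} \<in> E \<longrightarrow> w \<noteq> c \<longrightarrow> w \<in> Q))"
  shows "fragile V E"
  unfolding fragile_def
proof
  assume "\<exists>V' E'. subgraph V' E' V E \<and> k_connected 3 V' E'"
  then obtain V' E' where sg: "subgraph V' E' V E" and k: "k_connected 3 V' E'" by blast
  have g': "graph V' E'" and VV: "V' \<subseteq> V" and EE: "E' \<subseteq> E" using sg by (auto simp: subgraph_def)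
  have finE: "finite {e \<in> E. v \<in> e}" for v
    using graph_finite_E[OF g] by simp
  have same: "{e \<in> E'. v \<in> e} = {e \<in> E. v \<in> e}" if v: "v \<in> V'" for v
  proof -
    have "card {e \<in> E'. v \<in> e} \<ge> 3" using kconn_min_degree[OF g' k v] by (simp add: degree_def)
    moreover have "card {e \<in> E. v \<in> e} = 3" using cub v VV by (auto simp: cubic_def degree_def)
    moreover have "{e \<in> E'. v \<in> e} \<subseteq> {e \<in> E. v \<in> e}" using EE by auto
    moreover have "card {e \<in> E'. v \<in> e} \<le> card {e \<in> E. v \<in> e}"
      using card_mono[OF finE] calculation(3) by blast
    ultimately have "card {e \<in> E'. v \<in> e} = card {e \<in> E. v \<in> e}" by linarith
    then show ?thesis using card_subset_eq[OF finE] \<open>{e \<in> E'. v \<in> e} \<subseteq> {e \<in> E. v \<in> e}\<close> by blast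
  qed
  have c4: "card V' \<ge> 4" using k by (simp add: k_connected_def)
  then have ne: "V' \<noteq> {}" by auto
  have closed: "\<forall>u\<in>V'. \<forall>w. {u,w} \<in> E \<longrightarrow> w \<in> V'"
  proof (intro ballI allI impI)
    fix u w assume u: "u \<in> V'" and "{u,w} \<in> E"
    then have "{u,w} \<in> {e \<in> E. u \<in> e}" by simp
    then have "{u,w} \<in> {e \<in> E'. u \<in> e}" unfolding same[OF u] .
    then have "{u,w} \<in> E'" by simp
    then show "w \<in> V'" using graph_edge_in[OF g'] by simp
  qed
  obtain c a b Q where c: "c \<in> V'" and a: "a \<in> V'" and b: "b \<in> V'" and Q: "a \<in> Q" "b \<notin> Q" "c \<notin> Q" "b \<noteq> c"
    and Qc: "\<forall>u\<in>Q. \<forall>w. {u,w} \<in> E \<longrightarrow> w \<noteq> c \<longrightarrow> w \<in> Q"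
    using crit[OF VV ne closed] by blast
  have "\<not> connected (V' - {c}) (del_verts_E E' {c})"
  proof
    assume "connected (V' - {c}) (del_verts_E E' {c})"
    then have "(a, b) \<in> {(x, y). x \<in> V' - {c} \<and> y \<in> V' - {c} \<and> adj (del_verts_E E' {c}) x y}\<^sup>*"
      using a b Q by (intro connectedD) auto
    moreover have "q \<in> Q" if pq: "(p,q) \<in> {(x, y). x \<in> V' - {c} \<and> y \<in> V' - {c} \<and> adj (del_verts_E E' {c}) x y}" and pQ: "p \<in> Q" for p q
    proof -
      have "{p,q} \<in> E'" "q \<noteq> c" using pq by (auto simp: adj_def del_verts_E_def)
      then have "{p,q} \<in> E" using EE by blast
      then show "q \<in> Q" using Qc pQ \<open>q \<noteq> c\<close> by blast
    qed
    ultimately have "b \<in> Q" using no_path_out[where Q=Q] Q(1) by blast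
    then show False using Q by simp
  qed
  then have vc: "vertex_cutset V' E' {c}" using c by (simp add: vertex_cutset_def)
  have cc: "card {c} \<le> 3 - 1" by simp
  have nk: "\<not> (\<exists>S. vertex_cutset V' E' S \<and> card S \<le> 3 - 1)" using k unfolding k_connected_def by (rule conjunct2)
  show False by (rule notE[OF nk], rule exI[of _ "{c}"], rule conjI[OF vc cc])
qed



definition rw :: "nat \<Rightarrow> nat list set" where
  "rw N = {ws. set ws \<subseteq> {..<3} \<and> successively (\<noteq>) ws \<and> length ws \<le> N}"

definition sg :: "nat \<Rightarrow> nat \<Rightarrow> nat list \<Rightarrow> nat list" where
  "sg N s ws = (if ws \<notin> rw N then ws else if ws \<noteq> [] \<and> hd ws = s then tl ws
      else if length ws < N then s # ws else ws)"

lemma rw_tl: "s # t \<in> rw N \<Longrightarrow> t \<in> rw N \<and> (t \<noteq> [] \<longrightarrow> hd t \<noteq> s) \<and> length t < N"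
  by (auto simp: rw_def successively_Cons)

lemma rw_cons: "t \<in> rw N \<Longrightarrow> s < 3 \<Longrightarrow> (t \<noteq> [] \<longrightarrow> hd t \<noteq> s) \<Longrightarrow> length t < N \<Longrightarrow> s # t \<in> rw N"
  by (auto simp: rw_def successively_Cons)

lemma sg_in: "s < 3 \<Longrightarrow> w \<in> rw N \<Longrightarrow> sg N s w \<in> rw N"
  unfolding sg_def
  apply (cases w)
   apply (auto intro!: rw_cons dest: rw_tl)
  done

lemma sg_out: "w \<notin> rw N \<Longrightarrow> sg N s w = w"
  by (simp add: sg_def)

lemma sg_sg: assumes "s < 3" shows "sg N s (sg N s w) = w"
proof (cases "w \<in> rw N")
  case False then show ?thesis by (simp add: sg_out)
next
  case True
  show ?thesis
  proof (cases "w \<noteq> [] \<and> hd w = s")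
    case c1: True
    then obtain t where w: "w = s # t" by (cases w) auto
    have t: "t \<in> rw N" "t \<noteq> [] \<longrightarrow> hd t \<noteq> s" "length t < N" using rw_tl True w by blast+
    have "sg N s w = t" using True c1 w by (simp add: sg_def)
    moreover have "sg N s t = s # t" using t by (auto simp: sg_def)
    ultimately show ?thesis using w by simp
  next
    case c2: False
    show ?thesis
    proof (cases "length w < N")
      case c3: True
      have "sg N s w = s # w" using True c2 c3 by (auto simp: sg_def)
      moreover have "s # w \<in> rw N" using rw_cons True assms c2 c3 by blast
      ultimately show ?thesis using c2 by (auto simp: sg_def)
    next
      case False
      then have "sg N s w = w" using True c2 by (auto simp: sg_def)
      then show ?thesis by simp
    qed
  qed
qed

lemma sg_inj: "s < 3 \<Longrightarrow> inj (sg N s)"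
  by (metis injI sg_sg)

lemma sg_nil: "N \<ge> 1 \<Longrightarrow> s < 3 \<Longrightarrow> sg N s [] = [s]"
  by (simp add: sg_def rw_def)

inductive_set SS :: "nat \<Rightarrow> (nat list \<Rightarrow> nat list) set" for N where
  SS_id: "id \<in> SS N"
| SS_step: "h \<in> SS N \<Longrightarrow> s < 3 \<Longrightarrow> h \<circ> sg N s \<in> SS N"

lemma SS_inj: "h \<in> SS N \<Longrightarrow> inj h"
proof (induction rule: SS.induct)
  case SS_id then show ?case by simp
next
  case (SS_step h s)
  show ?case by (rule inj_compose) (use SS_step sg_inj in auto)
qed

lemma finite_rw: "finite (rw N)"
proof (rule finite_subset)
  show "rw N \<subseteq> {ws. set ws \<subseteq> {..<3} \<and> length ws \<le> N}" by (auto simp: rw_def)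
qed (rule finite_lists_length_le, simp)

lemma SS_F: "h \<in> SS N \<Longrightarrow> (\<forall>w. w \<notin> rw N \<longrightarrow> h w = w) \<and> (\<forall>w\<in>rw N. h w \<in> rw N)"
  by (induction rule: SS.induct) (auto simp: sg_out sg_in)

lemma finite_SS: "finite (SS N)"
proof -
  define F where "F = {h. (\<forall>w. w \<notin> rw N \<longrightarrow> h w = w) \<and> (\<forall>w\<in>rw N. h w \<in> rw N)}"
  define r where "r = (\<lambda>h w. if w \<in> rw N then h w else ([]::nat list))"
  have "inj_on r F"
  proof (rule inj_onI)
    fix h1 h2 assume h1: "h1 \<in> F" and h2: "h2 \<in> F" and eq: "r h1 = r h2"
    show "h1 = h2"
    proof
      fix w show "h1 w = h2 w"
      proof (cases "w \<in> rw N")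
        case True then show ?thesis using fun_cong[OF eq, of w] by (simp add: r_def)
      next
        case False then show ?thesis using h1 h2 by (simp add: F_def)
      qed
    qed
  qed
  moreover have "r ` F \<subseteq> {f. \<forall>x. (x \<in> rw N \<longrightarrow> f x \<in> rw N) \<and> (x \<notin> rw N \<longrightarrow> f x = [])}"
    by (auto simp: r_def F_def)
  moreover have "finite {f. \<forall>x. (x \<in> rw N \<longrightarrow> f x \<in> rw N) \<and> (x \<notin> rw N \<longrightarrow> f x = [])}"
    by (rule finite_set_of_finite_funs) (simp_all add: finite_rw)
  ultimately have "finite F" by (rule inj_on_finite)
  moreover have "SS N \<subseteq> F" using SS_F by (auto simp: F_def)
  ultimately show ?thesis by (rule finite_subset[rotated])
qed

definition cp :: "nat \<Rightarrow> nat list \<Rightarrow> nat list \<Rightarrow> nat list" where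
  "cp N ws = foldr (\<lambda>s f. sg N s \<circ> f) ws id"

lemma cp_snoc: "cp N (xs @ [s]) = cp N xs \<circ> sg N s"
  by (induction xs) (auto simp: cp_def)

lemma cp_nil: "ws \<in> rw N \<Longrightarrow> cp N ws [] = ws"
proof (induction ws)
  case Nil then show ?case by (simp add: cp_def)
next
  case (Cons s t)
  have t: "t \<in> rw N" "t \<noteq> [] \<longrightarrow> hd t \<noteq> s" "length t < N" using rw_tl Cons.prems by blast+
  have "cp N (s # t) [] = sg N s (cp N t [])" by (simp add: cp_def)
  also have "\<dots> = sg N s t" using Cons.IH t by simp
  also have "\<dots> = s # t" using t by (auto simp: sg_def)
  finally show ?case .
qed



definition EG :: "nat \<Rightarrow> (nat list \<Rightarrow> nat list) set set" where
  "EG N = {{h, h \<circ> sg N s} | h s. h \<in> SS N \<and> s < 3}"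

lemma sg_comp_sg: "s < 3 \<Longrightarrow> sg N s \<circ> sg N s = id"
  by (rule ext) (simp add: sg_sg)

lemma comp_cancel: "inj h \<Longrightarrow> h \<circ> f = h \<circ> f' \<Longrightarrow> f = f'"
proof (rule ext)
  fix w assume "inj h" "h \<circ> f = h \<circ> f'"
  then have "h (f w) = h (f' w)" by (metis comp_apply)
  then show "f w = f' w" using \<open>inj h\<close> by (simp add: inj_eq)
qed

lemma sg_distinct: "N \<ge> 1 \<Longrightarrow> s < 3 \<Longrightarrow> t < 3 \<Longrightarrow> sg N s = sg N t \<Longrightarrow> s = t"
  by (metis list.inject sg_nil)

lemma SS_sg: "h \<in> SS N \<Longrightarrow> s < 3 \<Longrightarrow> N \<ge> 1 \<Longrightarrow> h \<circ> sg N s \<noteq> h"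
proof
  assume h: "h \<in> SS N" and s: "s < 3" and N: "N \<ge> 1" and eq: "h \<circ> sg N s = h"
  have "h (sg N s []) = h []" using eq by (metis comp_apply)
  then have "h [s] = h []" using sg_nil N s by simp
  then show False using SS_inj[OF h] by (simp add: inj_eq)
qed

lemma EG_nbr:
  assumes "{u, w} \<in> EG N"
  shows "u \<in> SS N \<and> w \<in> SS N \<and> (\<exists>s<3. w = u \<circ> sg N s)"
proof -
  obtain h s where e: "{u,w} = {h, h \<circ> sg N s}" and h: "h \<in> SS N" and s: "s < 3"
    using assms by (auto simp: EG_def)
  have hs: "h \<circ> sg N s \<in> SS N" using h s by (rule SS_step)
  show ?thesis
  proof (cases "u = h")
    case True
    then have "w = h \<circ> sg N s" using e by (auto simp: doubleton_eq_iff)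
    then show ?thesis using True h hs s by blast
  next
    case False
    then have uw: "u = h \<circ> sg N s" "w = h" using e by (auto simp: doubleton_eq_iff)
    then have "u \<circ> sg N s = h" using sg_comp_sg[OF s] by (simp add: comp_assoc)
    then show ?thesis using uw h hs s by metis
  qed
qed

lemma EG_intro: "h \<in> SS N \<Longrightarrow> s < 3 \<Longrightarrow> {h, h \<circ> sg N s} \<in> EG N"
  by (auto simp: EG_def)

lemma graph_G: assumes N: "N \<ge> 1" shows "graph (SS N) (EG N)"
  unfolding graph_def
proof (intro conjI ballI)
  show "finite (SS N)" by (rule finite_SS)
next
  fix e assume "e \<in> EG N"
  then obtain h s where e: "e = {h, h \<circ> sg N s}" and h: "h \<in> SS N" and s: "s < 3"
    by (auto simp: EG_def)
  have "h \<circ> sg N s \<noteq> h" using SS_sg h s N by blast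
  moreover have "h \<circ> sg N s \<in> SS N" using h s by (rule SS_step)
  ultimately show "\<exists>u v. e = {u, v} \<and> u \<noteq> v \<and> u \<in> SS N \<and> v \<in> SS N" using e h by metis
qed

lemma nbrs_G: assumes N: "N \<ge> 1" and h: "h \<in> SS N"
  shows "nbrs (EG N) h = (\<lambda>s. h \<circ> sg N s) ` {..<3}"
proof
  show "nbrs (EG N) h \<subseteq> (\<lambda>s. h \<circ> sg N s) ` {..<3}"
  proof
    fix u assume "u \<in> nbrs (EG N) h"
    then have "{h,u} \<in> EG N" by (simp add: nbrs_def)
    then obtain s where "s < 3" "u = h \<circ> sg N s" using EG_nbr by blast
    then show "u \<in> (\<lambda>s. h \<circ> sg N s) ` {..<3}" by blast
  qed
next
  show "(\<lambda>s. h \<circ> sg N s) ` {..<3} \<subseteq> nbrs (EG N) h"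
    using EG_intro[OF h] by (auto simp: nbrs_def)
qed

lemma cubic_G: assumes N: "N \<ge> 1" shows "cubic (SS N) (EG N)"
  unfolding cubic_def
proof
  fix h assume h: "h \<in> SS N"
  have "inj_on (\<lambda>s. h \<circ> sg N s) {..<3}"
  proof (rule inj_onI)
    fix s t assume s: "s \<in> {..<3}" and t: "t \<in> {..<3}" and eq: "h \<circ> sg N s = h \<circ> sg N t"
    have "sg N s = sg N t" using comp_cancel[OF SS_inj[OF h] eq] .
    then show "s = t" using sg_distinct N s t by simp
  qed
  then have "card ((\<lambda>s. h \<circ> sg N s) ` {..<3}) = 3" by (simp add: card_image)
  then show "degree (EG N) h = 3" using degree_nbrs[OF graph_G[OF N]] nbrs_G[OF N h] by simp
qed

lemma successively_nthI:
  "(\<And>i. Suc i < length xs \<Longrightarrow> P (xs ! i) (xs ! Suc i)) \<Longrightarrow> successively P xs"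
proof (induction xs)
  case Nil then show ?case by simp
next
  case (Cons x ys)
  have "successively P ys"
    using Cons.prems by (intro Cons.IH) (metis Suc_less_eq length_Cons nth_Cons_Suc)
  moreover have "ys \<noteq> [] \<Longrightarrow> P x (hd ys)"
    using Cons.prems[of 0] by (simp add: hd_conv_nth)
  ultimately show ?case by (auto simp: successively_Cons)
qed

lemma mod_plus2_ne: "(n::nat) \<ge> 3 \<Longrightarrow> i < n \<Longrightarrow> (i + 2) mod n \<noteq> i"
proof -
  assume n: "n \<ge> 3" and i: "i < n"
  show ?thesis
  proof (cases "i + 2 < n")
    case True then show ?thesis by simp
  next
    case False
    then have "i + 2 = n + (i + 2 - n)" "i + 2 - n < n" using n i by auto
    then have "(i + 2) mod n = i + 2 - n" by (metis mod_add_self1 mod_less)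
    then show ?thesis using n i False by auto
  qed
qed

lemma G_no_short_cycle:
  assumes N: "N \<ge> 1" and n: "length vs = n" "3 \<le> n" and d: "distinct vs" and VS: "set vs \<subseteq> SS N"
    and ed: "\<forall>i<n. {vs ! i, vs ! ((i + 1) mod n)} \<in> EG N"
  shows "N < n"
proof (rule ccontr)
  assume "\<not> N < n"
  then have nN: "n \<le> N" by simp
  have ex: "\<exists>s. s < 3 \<and> vs ! ((i + 1) mod n) = vs ! i \<circ> sg N s" if "i < n" for i
    using EG_nbr[OF ed[rule_format, OF that]] by blast
  define f where "f i = (SOME s. s < 3 \<and> vs ! ((i + 1) mod n) = vs ! i \<circ> sg N s)" for i
  have hf: "f i < 3 \<and> vs ! ((i + 1) mod n) = vs ! i \<circ> sg N (f i)" if "i < n" for i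
    unfolding f_def by (rule someI_ex[OF ex[OF that]])
  define ss where "ss = map f [0..<n]"
  have lss: "length ss = n" by (simp add: ss_def)
  have claim: "vs ! 0 \<circ> cp N (take j ss) = vs ! (j mod n)" if "j \<le> n" for j
    using that
  proof (induction j)
    case 0 then show ?case by (simp add: cp_def)
  next
    case (Suc j)
    then have jn: "j < n" by simp
    have "take (Suc j) ss = take j ss @ [f j]"
      using jn lss by (simp add: take_Suc_conv_app_nth ss_def)
    then have "vs ! 0 \<circ> cp N (take (Suc j) ss) = (vs ! 0 \<circ> cp N (take j ss)) \<circ> sg N (f j)"
      by (simp add: cp_snoc comp_assoc)
    also have "\<dots> = vs ! j \<circ> sg N (f j)"
    proof -
      have "j \<le> n" using jn by simp
      then have "vs ! 0 \<circ> cp N (take j ss) = vs ! (j mod n)" by (rule Suc.IH)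
      then have IH: "vs ! 0 \<circ> cp N (take j ss) = vs ! j" using jn by (simp only: mod_less)
      show ?thesis by (simp only: IH)
    qed
    also have "\<dots> = vs ! ((j + 1) mod n)" using hf[OF jn] by simp
    finally show ?case by simp
  qed
  have "0 < length vs" using n by simp
  then have "vs ! 0 \<in> set vs" by (rule nth_mem)
  then have v0: "vs ! 0 \<in> SS N" using VS by blast
  have "vs ! 0 \<circ> cp N ss = vs ! 0 \<circ> id" using claim[of n] lss by simp
  then have cpid: "cp N ss = id" using comp_cancel[OF SS_inj[OF v0]] by blast
  have "successively (\<noteq>) ss"
  proof (rule successively_nthI)
    fix i assume i: "Suc i < length ss"
    show "ss ! i \<noteq> ss ! Suc i"
    proof
      assume eq: "ss ! i = ss ! Suc i"
      have i1: "i < n" "Suc i < n" using i lss by auto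
      have fi: "f i = f (Suc i)" using eq i1 by (simp add: ss_def)
      have a: "vs ! (Suc i) = vs ! i \<circ> sg N (f i)" using hf[OF i1(1)] i1 by simp
      have b: "vs ! ((i + 2) mod n) = vs ! (Suc i) \<circ> sg N (f i)" using hf[OF i1(2)] fi by simp
      have "vs ! ((i + 2) mod n) = vs ! i" using a b sg_comp_sg[of "f i" N] hf[OF i1(1)]
        by (simp add: comp_assoc)
      moreover have "(i + 2) mod n < length vs" using n by simp
      moreover have "i < length vs" using i1 n by simp
      ultimately have "(i + 2) mod n = i" using d by (simp add: nth_eq_iff_index_eq)
      then show False using mod_plus2_ne[OF n(2) i1(1)] by simp
    qed
  qed
  moreover have "set ss \<subseteq> {..<3}" using hf by (auto simp: ss_def)
  ultimately have "ss \<in> rw N" using lss nN by (simp add: rw_def)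
  then have "cp N ss [] = ss" by (rule cp_nil)
  then have "ss = []" using cpid by simp
  then show False using lss n by simp
qed

lemma G_conn: "h \<in> SS N \<Longrightarrow> (h, id) \<in> {(a, b). a \<in> SS N \<and> b \<in> SS N \<and> adj (EG N) a b}\<^sup>*"
proof (induction rule: SS.induct)
  case SS_id then show ?case by simp
next
  case (SS_step h s)
  have "{h \<circ> sg N s, h} \<in> EG N" using EG_intro[OF SS_step.hyps] by (simp add: insert_commute)
  then have "(h \<circ> sg N s, h) \<in> {(a, b). a \<in> SS N \<and> b \<in> SS N \<and> adj (EG N) a b}"
    using SS_step.hyps SS.SS_step by (simp add: adj_def)
  then show ?case using SS_step.IH by (rule converse_rtrancl_into_rtrancl)
qed



definition cycle_in :: "'a set \<Rightarrow> 'a set set \<Rightarrow> 'a list \<Rightarrow> bool" where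
  "cycle_in V E vs \<longleftrightarrow> 3 \<le> length vs \<and> distinct vs \<and> set vs \<subseteq> V \<and>
     (\<forall>i<length vs. {vs ! i, vs ! ((i + 1) mod length vs)} \<in> E)"

definition good_base :: "nat \<Rightarrow> 'a set \<Rightarrow> 'a set set \<Rightarrow> 'a \<Rightarrow> 'a \<Rightarrow> bool" where
  "good_base g V E x y \<longleftrightarrow> graph V E \<and> cubic V E \<and> {x, y} \<in> E \<and>
     (\<forall>vs. cycle_in V E vs \<longrightarrow> g \<le> length vs) \<and>
     (\<forall>h\<in>V. (h, x) \<in> {(a, b). a \<in> V \<and> b \<in> V \<and> adj E a b}\<^sup>*)"

lemma good_base_G: assumes N: "N \<ge> 1" shows "good_base N (SS N) (EG N) id (id \<circ> sg N 0)"
  unfolding good_base_def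
proof (intro conjI allI impI ballI)
  show "graph (SS N) (EG N)" using graph_G[OF N] .
  show "cubic (SS N) (EG N)" using cubic_G[OF N] .
  show "{id, id \<circ> sg N 0} \<in> EG N" by (rule EG_intro) (auto intro: SS.SS_id)
next
  fix vs assume "cycle_in (SS N) (EG N) vs"
  then have "N < length vs" unfolding cycle_in_def by (intro G_no_short_cycle[OF N refl]) auto
  then show "N \<le> length vs" by simp
next
  fix h assume "h \<in> SS N"
  then show "(h, id) \<in> {(a, b). a \<in> SS N \<and> b \<in> SS N \<and> adj (EG N) a b}\<^sup>*" by (rule G_conn)
qed

lemma image_edge: "f ` {a, b} = {f a, f b}" by simp

lemma good_base_transfer:
  assumes gb: "good_base g V E x y" and inj: "inj_on f V"
  shows "good_base g (f ` V) ((`) f ` E) (f x) (f y)"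
proof -
  have gr: "graph V E" and cub: "cubic V E" and xy: "{x,y} \<in> E"
    and cyc: "\<forall>vs. cycle_in V E vs \<longrightarrow> g \<le> length vs"
    and con: "\<forall>h\<in>V. (h, x) \<in> {(a, b). a \<in> V \<and> b \<in> V \<and> adj E a b}\<^sup>*"
    using gb unfolding good_base_def by blast+
  have E_img: "\<exists>a b. e' = {f a, f b} \<and> {a, b} \<in> E \<and> a \<noteq> b \<and> a \<in> V \<and> b \<in> V" if e'E: "e' \<in> (`) f ` E" for e'
  proof -
    obtain e where e: "e \<in> E" "e' = f ` e" using e'E by blast
    obtain a b where "e = {a,b}" "a \<noteq> b" "a \<in> V" "b \<in> V" using graph_edgeE[OF gr e(1)] by metis
    then show ?thesis using e by auto
  qed
  have edge_back: "{a, b} \<in> E" if H: "{f a, f b} \<in> (`) f ` E" "a \<in> V" "b \<in> V" for a b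
  proof -
    obtain a' b' where ab': "{f a, f b} = {f a', f b'}" "{a', b'} \<in> E" "a' \<in> V" "b' \<in> V"
      using E_img[OF H(1)] by blast
    have "(f a = f a' \<and> f b = f b') \<or> (f a = f b' \<and> f b = f a')" using ab'(1) by (auto simp: doubleton_eq_iff)
    then have "(a = a' \<and> b = b') \<or> (a = b' \<and> b = a')" using inj H(2,3) ab'(3,4) by (auto dest: inj_onD)
    then show ?thesis using ab'(2) by (auto simp: insert_commute)
  qed
  have gr': "graph (f ` V) ((`) f ` E)"
    unfolding graph_def
  proof (intro conjI ballI)
    show "finite (f ` V)" using gr by (simp add: graph_def)
  next
    fix e' assume "e' \<in> (`) f ` E"
    then obtain a b where ab: "e' = {f a, f b}" "a \<noteq> b" "a \<in> V" "b \<in> V" using E_img by blast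
    then have "f a \<noteq> f b" using inj by (auto dest: inj_onD)
    then show "\<exists>u v. e' = {u, v} \<and> u \<noteq> v \<and> u \<in> f ` V \<and> v \<in> f ` V" using ab by blast
  qed
  have nb: "nbrs ((`) f ` E) (f v) = f ` nbrs E v" if v: "v \<in> V" for v
  proof
    show "nbrs ((`) f ` E) (f v) \<subseteq> f ` nbrs E v"
    proof
      fix u' assume "u' \<in> nbrs ((`) f ` E) (f v)"
      then have u': "{f v, u'} \<in> (`) f ` E" by (simp add: nbrs_def)
      then have "u' \<in> f ` V" using graph_edge_in[OF gr'] by blast
      then obtain u where u: "u \<in> V" "u' = f u" by blast
      then have "{v, u} \<in> E" using edge_back u' v by simp
      then show "u' \<in> f ` nbrs E v" using u by (simp add: nbrs_def)
    qed
  next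
    show "f ` nbrs E v \<subseteq> nbrs ((`) f ` E) (f v)"
    proof
      fix u' assume "u' \<in> f ` nbrs E v"
      then obtain u where u: "{v,u} \<in> E" "u' = f u" by (auto simp: nbrs_def)
      then have "f ` {v,u} \<in> (`) f ` E" by blast
      then show "u' \<in> nbrs ((`) f ` E) (f v)" using u by (simp add: nbrs_def)
    qed
  qed
  have cub': "cubic (f ` V) ((`) f ` E)"
    unfolding cubic_def
  proof
    fix v' assume "v' \<in> f ` V"
    then obtain v where v: "v \<in> V" "v' = f v" by blast
    have sub: "nbrs E v \<subseteq> V" using graph_edge_in[OF gr] by (auto simp: nbrs_def)
    have "degree ((`) f ` E) v' = card (f ` nbrs E v)" using degree_nbrs[OF gr'] nb[OF v(1)] v(2) by simp
    also have "\<dots> = card (nbrs E v)" using inj_on_subset[OF inj sub] by (rule card_image)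
    also have "\<dots> = 3" using degree_nbrs[OF gr] cub v(1) by (simp add: cubic_def)
    finally show "degree ((`) f ` E) v' = 3" .
  qed
  have xy': "{f x, f y} \<in> (`) f ` E" using xy image_edge[of f x y] by (metis imageI)
  have cyc': "g \<le> length vs'" if c: "cycle_in (f ` V) ((`) f ` E) vs'" for vs'
  proof -
    define vs where "vs = map (inv_into V f) vs'"
    have l: "length vs = length vs'" by (simp add: vs_def)
    have sv: "set vs' \<subseteq> f ` V" using c by (simp add: cycle_in_def)
    have bk: "f (vs ! i) = vs' ! i" if "i < length vs'" for i
      using that sv by (simp add: vs_def f_inv_into_f nth_mem subset_iff)
    have inV: "vs ! i \<in> V" if "i < length vs'" for i
      using that sv by (simp add: vs_def inv_into_into nth_mem subset_iff)
    have "cycle_in V E vs"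
      unfolding cycle_in_def
    proof (intro conjI allI impI)
      show "3 \<le> length vs" using c l by (simp add: cycle_in_def)
      show "distinct vs" using c sv inj_on_inv_into[OF sv] by (simp add: vs_def cycle_in_def distinct_map)
      show "set vs \<subseteq> V" using sv by (auto simp: vs_def inv_into_into)
    next
      fix i assume i: "i < length vs"
      let ?j = "(i + 1) mod length vs"
      have "0 < length vs" using i by (rule le_less_trans[OF le0])
      then have "?j < length vs" by (rule mod_less_divisor)
      then have j: "?j < length vs'" using l by simp
      have "{vs' ! i, vs' ! ?j} \<in> (`) f ` E" using c i l by (simp add: cycle_in_def)
      then have "{f (vs ! i), f (vs ! ?j)} \<in> (`) f ` E" using bk i j l by simp
      then show "{vs ! i, vs ! ?j} \<in> E" using edge_back inV i j l by simp
    qed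
    then have "g \<le> length vs" using cyc by blast
    then show ?thesis using l by simp
  qed
  let ?R = "{(a, b). a \<in> V \<and> b \<in> V \<and> adj E a b}"
  let ?R' = "{(a, b). a \<in> f ` V \<and> b \<in> f ` V \<and> adj ((`) f ` E) a b}"
  have mp: "(f p, f q) \<in> ?R'\<^sup>*" if "(p, q) \<in> ?R\<^sup>*" for p q
    using that
  proof (induction rule: rtrancl_induct)
    case base then show ?case by simp
  next
    case (step b c)
    then have bc: "b \<in> V" "c \<in> V" "{b, c} \<in> E" by (auto simp: adj_def)
    then have "f ` {b, c} \<in> (`) f ` E" using imageI[of "{b,c}" E "(`) f"] by simp
    then have "{f b, f c} \<in> (`) f ` E" by simp
    then have "(f b, f c) \<in> ?R'" using bc by (simp add: adj_def)
    then show ?case by (rule rtrancl_into_rtrancl[OF step.IH])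
  qed
  have con': "\<forall>h\<in>f ` V. (h, f x) \<in> ?R'\<^sup>*" using con mp by blast
  show ?thesis unfolding good_base_def using gr' cub' xy' cyc' con' by blast
qed

lemma base_nat: assumes "g \<ge> 1" shows "\<exists>(V::nat set) E x y. good_base g V E x y"
proof -
  have gb: "good_base g (SS g) (EG g) id (id \<circ> sg g 0)" using good_base_G[OF assms] .
  obtain f :: "(nat list \<Rightarrow> nat list) \<Rightarrow> nat" and n where "f ` SS g = {i. i < n}" "inj_on f (SS g)"
    using finite_imp_inj_to_nat_seg[OF finite_SS] by blast
  then show ?thesis using good_base_transfer[OF gb] by blast
qed



definition cv :: "nat \<Rightarrow> nat" where "cv i = prod_encode (0, i)"
definition zv :: "nat \<Rightarrow> nat" where "zv i = prod_encode (1, i)"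
definition gv :: "nat \<Rightarrow> nat \<Rightarrow> nat" where "gv i h = prod_encode (2, prod_encode (i, h))"
definition ungv :: "nat \<Rightarrow> nat" where "ungv v = snd (prod_decode (snd (prod_decode v)))"

lemma enc_simps [simp]:
  "cv i = cv j \<longleftrightarrow> i = j" "zv i = zv j \<longleftrightarrow> i = j" "gv i a = gv j b \<longleftrightarrow> i = j \<and> a = b"
  "cv i \<noteq> zv j" "zv j \<noteq> cv i" "cv i \<noteq> gv j a" "gv j a \<noteq> cv i" "zv i \<noteq> gv j a" "gv j a \<noteq> zv i"
  "ungv (gv i h) = h"
  by (auto simp: cv_def zv_def gv_def ungv_def)

locale fin =
  fixes g :: nat and VG :: "nat set" and EG :: "nat set set" and x y :: nat
  assumes g3: "g \<ge> 3" and gb: "good_base g VG EG x y"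
begin

lemma grG: "graph VG EG" and cubG: "cubic VG EG" and xyE: "{x,y} \<in> EG"
  and cycG: "\<And>vs. cycle_in VG EG vs \<Longrightarrow> g \<le> length vs"
  and conG: "\<And>h. h \<in> VG \<Longrightarrow> (h, x) \<in> {(a, b). a \<in> VG \<and> b \<in> VG \<and> adj EG a b}\<^sup>*"
  using gb unfolding good_base_def by blast+

lemma xy: "x \<in> VG" "y \<in> VG" "x \<noteq> y"
  using graph_edge_in[OF grG xyE] graph_edge_ne[OF grG xyE] by auto

definition nxt :: "nat \<Rightarrow> nat" where "nxt i = (if Suc i = g then 0 else Suc i)"
definition prv :: "nat \<Rightarrow> nat" where "prv i = (if i = 0 then g - 1 else i - 1)"

lemma nxt_lt: "i < g \<Longrightarrow> nxt i < g" using g3 by (auto simp: nxt_def)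
lemma prv_lt: "i < g \<Longrightarrow> prv i < g" using g3 by (auto simp: prv_def)
lemma nxt_ne: "i < g \<Longrightarrow> nxt i \<noteq> i" using g3 by (auto simp: nxt_def)
lemma prv_ne_nxt: "i < g \<Longrightarrow> prv i \<noteq> nxt i" using g3 by (auto simp: nxt_def prv_def)
lemma prv_ne: "i < g \<Longrightarrow> prv i \<noteq> i" using g3 by (auto simp: prv_def)
lemma nxt_eq_iff: "i < g \<Longrightarrow> j < g \<Longrightarrow> nxt j = i \<longleftrightarrow> j = prv i"
  using g3 by (auto simp: nxt_def prv_def)
lemma nxt_mod: "i < g \<Longrightarrow> nxt i = (i + 1) mod g"
  using g3 by (auto simp: nxt_def)

definition Adj :: "nat \<Rightarrow> nat \<Rightarrow> bool" where
  "Adj u w \<longleftrightarrow> (\<exists>i<g. u = cv i \<and> w = cv (nxt i)) \<or> (\<exists>i<g. u = cv i \<and> w = zv i)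
     \<or> (\<exists>i<g. u = zv i \<and> (w = gv i x \<or> w = gv i y))
     \<or> (\<exists>i<g. \<exists>a b. u = gv i a \<and> w = gv i b \<and> {a, b} \<in> EG \<and> {a, b} \<noteq> {x, y})"

definition FV :: "nat set" where
  "FV = cv ` {..<g} \<union> zv ` {..<g} \<union> (\<lambda>(i, h). gv i h) ` ({..<g} \<times> VG)"

definition FE :: "nat set set" where
  "FE = {{u, w} | u w. Adj u w}"

lemma FE_iff: "{p, q} \<in> FE \<longleftrightarrow> Adj p q \<or> Adj q p"
  unfolding FE_def by (auto simp: doubleton_eq_iff)

lemma gv_in_FV: "gv i h \<in> FV \<longleftrightarrow> i < g \<and> h \<in> VG"
  by (auto simp: FV_def)
lemma cv_in_FV: "cv i \<in> FV \<longleftrightarrow> i < g"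
  by (auto simp: FV_def)
lemma zv_in_FV: "zv i \<in> FV \<longleftrightarrow> i < g"
  by (auto simp: FV_def)

lemma FV_cases:
  assumes "v \<in> FV"
  obtains (C) i where "i < g" "v = cv i" | (Z) i where "i < g" "v = zv i"
    | (G) i h where "i < g" "h \<in> VG" "v = gv i h"
proof -
  consider "v \<in> cv ` {..<g}" | "v \<in> zv ` {..<g}" | "v \<in> (\<lambda>(i, h). gv i h) ` ({..<g} \<times> VG)"
    using assms unfolding FV_def by blast
  then show ?thesis
  proof cases
    case 1 then show ?thesis using C by blast
  next
    case 2 then show ?thesis using Z by blast
  next
    case 3
    then obtain p where p: "p \<in> {..<g} \<times> VG" "v = (\<lambda>(i, h). gv i h) p" by (rule imageE)
    obtain i h where "p = (i, h)" by (cases p)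
    then show ?thesis using p G by simp
  qed
qed

lemma Adj_FV: "Adj u w \<Longrightarrow> u \<in> FV \<and> w \<in> FV \<and> u \<noteq> w"
proof -
  assume "Adj u w"
  then consider (a) i where "i < g" "u = cv i" "w = cv (nxt i)"
    | (b) i where "i < g" "u = cv i" "w = zv i"
    | (c) i where "i < g" "u = zv i" "w = gv i x \<or> w = gv i y"
    | (d) i a b where "i < g" "u = gv i a" "w = gv i b" "{a, b} \<in> EG"
    using \<open>Adj u w\<close> unfolding Adj_def by (elim disjE exE conjE) blast+
  then show ?thesis
  proof cases
    case a
    then have "i \<noteq> nxt i" using nxt_ne by metis
    then show ?thesis using a nxt_lt by (auto simp: cv_in_FV)
  next
    case b then show ?thesis by (auto simp: cv_in_FV zv_in_FV)
  next
    case c then show ?thesis using xy by (auto simp: gv_in_FV zv_in_FV)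
  next
    case d then show ?thesis using graph_edge_in[OF grG d(4)] graph_edge_ne[OF grG d(4)]
      by (auto simp: gv_in_FV)
  qed
qed

lemma graph_F: "graph FV FE"
  unfolding graph_def
proof (intro conjI ballI)
  show "finite FV" using grG by (simp add: FV_def graph_def)
next
  fix e assume "e \<in> FE"
  then obtain u w where "e = {u, w}" "Adj u w" unfolding FE_def by blast
  then show "\<exists>u v. e = {u, v} \<and> u \<noteq> v \<and> u \<in> FV \<and> v \<in> FV" using Adj_FV by blast
qed

lemma nbrs_F: "nbrs FE v = {u. Adj v u \<or> Adj u v}"
  by (simp add: nbrs_def FE_iff)

lemma nxt_prv: "i < g \<Longrightarrow> nxt (prv i) = i" using g3 by (auto simp: nxt_def prv_def)

lemma Adj_cv_l: "i < g \<Longrightarrow> Adj (cv i) u \<longleftrightarrow> u = cv (nxt i) \<or> u = zv i"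
  unfolding Adj_def by simp

lemma Adj_cv_r: assumes i: "i < g" shows "Adj u (cv i) \<longleftrightarrow> u = cv (prv i)"
proof
  assume "Adj u (cv i)"
  then obtain j where "j < g" "u = cv j" "cv i = cv (nxt j)" unfolding Adj_def by auto
  then show "u = cv (prv i)" using nxt_eq_iff[OF i] by auto
next
  assume "u = cv (prv i)"
  then show "Adj u (cv i)" unfolding Adj_def using prv_lt[OF i] nxt_prv[OF i] by auto
qed

lemma nbrs_cv: assumes i: "i < g" shows "nbrs FE (cv i) = {cv (nxt i), cv (prv i), zv i}"
  unfolding nbrs_F by (auto simp: Adj_cv_l[OF i] Adj_cv_r[OF i])

lemma Adj_zv_l: "i < g \<Longrightarrow> Adj (zv i) u \<longleftrightarrow> u = gv i x \<or> u = gv i y"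
  unfolding Adj_def by simp

lemma Adj_zv_r: "i < g \<Longrightarrow> Adj u (zv i) \<longleftrightarrow> u = cv i"
  unfolding Adj_def by auto

lemma nbrs_zv: assumes i: "i < g" shows "nbrs FE (zv i) = {cv i, gv i x, gv i y}"
  unfolding nbrs_F by (auto simp: Adj_zv_l[OF i] Adj_zv_r[OF i])

lemma Adj_gv_l: "Adj (gv i h) u \<longleftrightarrow> i < g \<and> (\<exists>b. u = gv i b \<and> {h, b} \<in> EG \<and> {h, b} \<noteq> {x, y})"
  unfolding Adj_def by auto

lemma Adj_gv_r: "Adj u (gv i h) \<longleftrightarrow> i < g \<and> ((u = zv i \<and> (h = x \<or> h = y)) \<or>
     (\<exists>a. u = gv i a \<and> {a, h} \<in> EG \<and> {a, h} \<noteq> {x, y}))"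
  unfolding Adj_def by auto

lemma nbrs_gv: assumes i: "i < g"
  shows "nbrs FE (gv i h) = gv i ` {a. {h, a} \<in> EG \<and> {h, a} \<noteq> {x, y}} \<union> (if h = x \<or> h = y then {zv i} else {})"
proof -
  have "nbrs FE (gv i h) = {u. Adj (gv i h) u \<or> Adj u (gv i h)}" by (rule nbrs_F)
  also have "\<dots> = gv i ` {a. {h, a} \<in> EG \<and> {h, a} \<noteq> {x, y}} \<union> (if h = x \<or> h = y then {zv i} else {})"
    unfolding Adj_gv_l Adj_gv_r using i by (auto simp: insert_commute)
  finally show ?thesis .
qed

lemma card_nbrsG: "h \<in> VG \<Longrightarrow> card (nbrs EG h) = 3"
  using cubG degree_nbrs[OF grG] by (simp add: cubic_def)

lemma finite_nbrsG: "finite (nbrs EG h)" by (rule graph_finite_nbrs[OF grG])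

lemma cubic_F: "cubic FV FE"
  unfolding cubic_def
proof
  fix v assume "v \<in> FV"
  then show "degree FE v = 3"
  proof (cases rule: FV_cases)
    case (C i)
    have "card {cv (nxt i), cv (prv i), zv i} = 3" using prv_ne_nxt[OF C(1)] by simp
    then show ?thesis using C nbrs_cv degree_nbrs[OF graph_F] by simp
  next
    case (Z i)
    have "card {cv i, gv i x, gv i y} = 3" using xy by simp
    then show ?thesis using Z nbrs_zv degree_nbrs[OF graph_F] by simp
  next
    case (G i h)
    define A where "A = {a. {h, a} \<in> EG \<and> {h, a} \<noteq> {x, y}}"
    have inj: "inj_on (gv i) A" by (rule inj_onI) simp
    have nb: "nbrs FE v = gv i ` A \<union> (if h = x \<or> h = y then {zv i} else {})"
      using G nbrs_gv by (simp add: A_def)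
    have "card (nbrs FE v) = 3"
    proof (cases "h = x \<or> h = y")
      case True
      define oth where "oth = (if h = x then y else x)"
      have hxy: "{h, oth} = {x, y}" using True by (auto simp: oth_def)
      have ho: "h \<noteq> oth" using True xy by (auto simp: oth_def)
      have Aeq: "A = nbrs EG h - {oth}"
      proof
        show "A \<subseteq> nbrs EG h - {oth}" using hxy by (auto simp: A_def nbrs_def)
      next
        show "nbrs EG h - {oth} \<subseteq> A"
        proof
          fix a assume a: "a \<in> nbrs EG h - {oth}"
          have "{h, a} \<noteq> {x, y}"
          proof
            assume "{h, a} = {x, y}"
            then have "{h, a} = {h, oth}" using hxy by simp
            then show False using a ho by (auto simp: doubleton_eq_iff)
          qed
          then show "a \<in> A" using a by (simp add: A_def nbrs_def)
        qed
      qed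
      have "oth \<in> nbrs EG h" using hxy xyE by (simp add: nbrs_def)
      then have cA: "card A = 2" using Aeq card_nbrsG[OF G(2)] finite_nbrsG by simp
      have "zv i \<notin> gv i ` A" by auto
      moreover have "finite A" using Aeq finite_nbrsG by simp
      ultimately have "card (insert (zv i) (gv i ` A)) = 3" using cA card_image[OF inj] by simp
      then show ?thesis using nb True by simp
    next
      case False
      have "A = nbrs EG h" using False by (auto simp: A_def nbrs_def doubleton_eq_iff)
      then have "card (gv i ` A) = 3" using card_image[OF inj] card_nbrsG[OF G(2)] by simp
      then show ?thesis using nb False by simp
    qed
    then show ?thesis using degree_nbrs[OF graph_F] by simp
  qed
qed

definition Qi :: "nat \<Rightarrow> nat set" where "Qi i = insert (zv i) (gv i ` VG)"

lemma EG_VG: "{a, b} \<in> EG \<Longrightarrow> a \<in> VG \<and> b \<in> VG" by (rule graph_edge_in[OF grG])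

lemma cross:
  assumes e: "{a, b} \<in> FE" and i: "i < g" and a: "a \<in> Qi i" and b: "b \<notin> Qi i"
  shows "a = zv i \<and> b = cv i"
proof -
  have ab: "Adj a b \<or> Adj b a" using e by (simp add: FE_iff)
  show ?thesis
  proof (cases "a = zv i")
    case True
    have "b \<noteq> gv i x" "b \<noteq> gv i y" using b xy(1,2) unfolding Qi_def by blast+
    then have "\<not> Adj a b" using True by (simp add: Adj_zv_l[OF i])
    then have "Adj b a" using ab by blast
    then show ?thesis using True by (simp add: Adj_zv_r[OF i])
  next
    case False
    then obtain h where h: "a = gv i h" "h \<in> VG" using a unfolding Qi_def by blast
    have n1: "\<not> Adj a b"
    proof
      assume "Adj a b"
      then obtain b' where b': "b = gv i b'" "{h, b'} \<in> EG" using h(1) by (auto simp: Adj_gv_l)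
      then have "b' \<in> VG" using EG_VG by blast
      then have "b \<in> Qi i" using b'(1) by (simp add: Qi_def)
      then show False using b by simp
    qed
    have n2: "\<not> Adj b a"
    proof
      assume "Adj b a"
      then have "b = zv i \<or> (\<exists>a'. b = gv i a' \<and> {a', h} \<in> EG)" using h(1) by (auto simp: Adj_gv_r)
      then show False
      proof
        assume "b = zv i" then show False using b by (simp add: Qi_def)
      next
        assume "\<exists>a'. b = gv i a' \<and> {a', h} \<in> EG"
        then obtain a' where a': "b = gv i a'" "{a', h} \<in> EG" by blast
        then have "a' \<in> VG" using EG_VG by blast
        then have "b \<in> Qi i" using a'(1) by (simp add: Qi_def)
        then show False using b by simp
      qed
    qed
    show ?thesis using ab n1 n2 by blast
  qed
qed

lemma fragile_F: "fragile FV FE"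
proof (rule fragile_crit[OF graph_F cubic_F])
  fix W assume WV: "W \<subseteq> FV" and Wne: "W \<noteq> {}" and cl: "\<forall>u\<in>W. \<forall>w. {u, w} \<in> FE \<longrightarrow> w \<in> W"
  have clo: "w \<in> W" if "u \<in> W" "Adj u w \<or> Adj w u" for u w
  proof -
    have "{u, w} \<in> FE" using that(2) by (simp add: FE_iff)
    then show ?thesis using cl that(1) by blast
  qed
  have zc: "cv i \<in> W" if "zv i \<in> W" "i < g" for i
  proof -
    have "Adj (cv i) (zv i)" by (simp add: Adj_zv_r[OF that(2)])
    then show ?thesis using clo[OF that(1)] by blast
  qed
  have gz: "zv i \<in> W" if "gv i h \<in> W" "i < g" "h \<in> VG" for i h
  proof -
    have "(h, x) \<in> {(a, b). a \<in> VG \<and> b \<in> VG \<and> adj EG a b}\<^sup>*" using conG[OF that(3)] .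
    then have "gv i h \<in> W \<longrightarrow> zv i \<in> W"
    proof (induction rule: converse_rtrancl_induct)
      case base
      have "Adj (zv i) (gv i x)" by (simp add: Adj_zv_l[OF that(2)])
      then show ?case using clo[of "gv i x" "zv i"] by blast
    next
      case (step h h')
      then have hh: "{h, h'} \<in> EG" by (simp add: adj_def)
      show ?case
      proof
        assume hW: "gv i h \<in> W"
        show "zv i \<in> W"
        proof (cases "{h, h'} = {x, y}")
          case True
          then have "h = x \<or> h = y" by (auto simp: doubleton_eq_iff)
          then show ?thesis using clo[OF hW, of "zv i"] that(2) by (auto simp: Adj_gv_r)
        next
          case False
          then have "gv i h' \<in> W" using clo[OF hW, of "gv i h'"] that(2) hh by (auto simp: Adj_gv_l)
          then show ?thesis using step.IH by blast
        qed
      qed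
    qed
    then show ?thesis using that(1) by blast
  qed
  obtain v where v: "v \<in> W" using Wne by blast
  then have "v \<in> FV" using WV by blast
  then obtain i where i: "i < g" and ci: "cv i \<in> W"
  proof (cases rule: FV_cases)
    case (C i) then show ?thesis using that v by blast
  next
    case (Z i) then show ?thesis using that v zc by blast
  next
    case (G i h) then show ?thesis using that v zc gz by blast
  qed
  have zW: "zv i \<in> W" using clo[OF ci, of "zv i"] by (simp add: Adj_cv_l[OF i])
  have nW: "cv (nxt i) \<in> W" using clo[OF ci, of "cv (nxt i)"] by (simp add: Adj_cv_l[OF i])
  have Qcl: "\<forall>u\<in>Qi i. \<forall>w. {u, w} \<in> FE \<longrightarrow> w \<noteq> cv i \<longrightarrow> w \<in> Qi i"
    using cross[OF _ i] by blast
  have q: "zv i \<in> Qi i" "cv (nxt i) \<notin> Qi i" "cv i \<notin> Qi i" "cv (nxt i) \<noteq> cv i"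
    using nxt_ne[OF i] by (auto simp: Qi_def)
  show "\<exists>c\<in>W. \<exists>a\<in>W. \<exists>b\<in>W. \<exists>Q. a \<in> Q \<and> b \<notin> Q \<and> c \<notin> Q \<and> b \<noteq> c \<and>
          (\<forall>u\<in>Q. \<forall>w. {u, w} \<in> FE \<longrightarrow> w \<noteq> c \<longrightarrow> w \<in> Q)"
    apply (rule bexI[of _ "cv i"], rule bexI[of _ "zv i"], rule bexI[of _ "cv (nxt i)"], rule exI[of _ "Qi i"])
    using ci zW nW Qcl q by simp_all
qed

end



lemma list_trans:
  assumes n: "length vs = n" and a: "a < n" "vs ! a \<in> Q" and b: "b < n" "vs ! b \<notin> Q"
  shows "\<exists>k<n. vs ! k \<in> Q \<and> vs ! ((k + 1) mod n) \<notin> Q"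
proof (rule ccontr)
  assume H: "\<not> (\<exists>k<n. vs ! k \<in> Q \<and> vs ! ((k + 1) mod n) \<notin> Q)"
  have np: "0 < n" using a by simp
  have all: "vs ! ((a + t) mod n) \<in> Q" for t
  proof (induction t)
    case 0 then show ?case using a by simp
  next
    case (Suc t)
    have "(a + t) mod n < n" using np by simp
    then have "vs ! (((a + t) mod n + 1) mod n) \<in> Q" using H Suc.IH by blast
    moreover have "((a + t) mod n + 1) mod n = (a + Suc t) mod n" by (simp add: mod_Suc_eq)
    ultimately show ?case by simp
  qed
  have "(a + (b + n - a)) mod n = b" using a b by simp
  then have "vs ! b \<in> Q" using all[of "b + n - a"] by simp
  then show False using b by simp
qed

lemma mod_plus2_ne': "(n::nat) \<ge> 3 \<Longrightarrow> k < n \<Longrightarrow> ((k + 1) mod n + 1) mod n \<noteq> k"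
  using mod_plus2_ne[of n k] by (simp add: mod_Suc_eq)

lemma cross_cycle:
  assumes c: "cycle_in V E vs"
    and cr: "\<And>a b. {a, b} \<in> E \<Longrightarrow> a \<in> Q \<Longrightarrow> b \<notin> Q \<Longrightarrow> a = cc \<and> b = dd"
    and a: "a < length vs" "vs ! a \<in> Q" and b: "b < length vs" "vs ! b \<notin> Q"
  shows False
proof -
  define n where "n = length vs"
  have n3: "n \<ge> 3" and d: "distinct vs" and ed: "\<And>i. i < n \<Longrightarrow> {vs ! i, vs ! ((i + 1) mod n)} \<in> E"
    using c by (auto simp: cycle_in_def n_def)
  obtain k where k: "k < n" "vs ! k \<in> Q" "vs ! ((k + 1) mod n) \<notin> Q"
    using list_trans[of vs n a Q b] a b n_def by blast
  obtain m where m: "m < n" "vs ! m \<in> - Q" "vs ! ((m + 1) mod n) \<notin> - Q"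
    using list_trans[of vs n b "- Q" a] a b n_def by auto
  have k1: "vs ! k = cc" "vs ! ((k + 1) mod n) = dd" using cr[OF ed[OF k(1)] k(2,3)] by auto
  have "{vs ! ((m + 1) mod n), vs ! m} \<in> E" using ed[OF m(1)] by (simp add: insert_commute)
  then have m1: "vs ! ((m + 1) mod n) = cc" "vs ! m = dd" using cr m(2,3) by auto
  have kl: "(k + 1) mod n < n" "(m + 1) mod n < n" using n3 by simp_all
  have "vs ! k = vs ! ((m + 1) mod n)" using k1(1) m1(1) by simp
  then have "k = (m + 1) mod n" using nth_eq_iff_index_eq[OF d, of k "(m + 1) mod n"] k(1) kl(2) n_def by simp
  moreover have "vs ! ((k + 1) mod n) = vs ! m" using k1(2) m1(2) by simp
  then have "(k + 1) mod n = m" using nth_eq_iff_index_eq[OF d, of "(k + 1) mod n" m] m(1) kl(1) n_def by simp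
  ultimately have "((k + 1) mod n + 1) mod n = k" by simp
  then show False using mod_plus2_ne'[OF n3 k(1)] by simp
qed

lemma cycle_rotate:
  assumes c: "cycle_in V E vs"
  shows "cycle_in V E (rotate r vs)"
proof -
  define n where "n = length vs"
  have n3: "n \<ge> 3" and d: "distinct vs" and sv: "set vs \<subseteq> V"
    and ed: "\<And>i. i < n \<Longrightarrow> {vs ! i, vs ! ((i + 1) mod n)} \<in> E"
    using c by (auto simp: cycle_in_def n_def)
  show ?thesis
    unfolding cycle_in_def
  proof (intro conjI allI impI)
    show "3 \<le> length (rotate r vs)" using n3 n_def by simp
    show "distinct (rotate r vs)" using d by simp
    show "set (rotate r vs) \<subseteq> V" using sv by simp
  next
    fix i assume i: "i < length (rotate r vs)"
    then have i': "i < n" by (simp add: n_def)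
    have j: "(i + 1) mod n < n" using n3 by simp
    have e1: "rotate r vs ! i = vs ! ((r + i) mod n)" using i' by (simp add: nth_rotate n_def)
    have e2: "rotate r vs ! ((i + 1) mod n) = vs ! ((r + (i + 1) mod n) mod n)" using j by (simp add: nth_rotate n_def)
    have "(r + (i + 1) mod n) mod n = ((r + i) mod n + 1) mod n"
      by (simp add: mod_add_right_eq mod_Suc_eq)
    moreover have "(r + i) mod n < n" using n3 by simp
    ultimately have "{rotate r vs ! i, rotate r vs ! ((i + 1) mod n)} \<in> E" using e1 e2 ed by simp
    then show "{rotate r vs ! i, rotate r vs ! ((i + 1) mod length (rotate r vs))} \<in> E" by (simp add: n_def)
  qed
qed

lemma idx_prev: assumes "(n::nat) \<ge> 3" "k < n"
  shows "(if k = 0 then n - 1 else k - 1) < n \<and> ((if k = 0 then n - 1 else k - 1) + 1) mod n = k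
     \<and> (if k = 0 then n - 1 else k - 1) \<noteq> (k + 1) mod n"
proof (cases "k = 0")
  case True then show ?thesis using assms by simp
next
  case False
  show ?thesis
  proof (cases "k + 1 = n")
    case True then show ?thesis using assms False by simp
  next
    case False2: False
    then have "(k + 1) mod n = k + 1" using assms by simp
    then show ?thesis using assms False by (simp, arith)
  qed
qed



context fin begin

lemma cv_cycle:
  assumes c: "cycle_in FV FE vs" and sc: "set vs \<subseteq> range cv"
  shows "g \<le> length vs"
proof -
  define n where "n = length vs"
  have n3: "n \<ge> 3" and d: "distinct vs" and sv: "set vs \<subseteq> FV"
    and ed: "\<And>i. i < n \<Longrightarrow> {vs ! i, vs ! ((i + 1) mod n)} \<in> FE"
    using c by (auto simp: cycle_in_def n_def)
  define T where "T = {j. cv j \<in> set vs}"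
  have Tg: "T \<subseteq> {..<g}" using sv by (auto simp: T_def cv_in_FV)
  have clos: "nxt j \<in> T" if jT: "j \<in> T" for j
  proof -
    have jg: "j < g" using jT Tg by auto
    obtain k where k: "k < n" "vs ! k = cv j" using jT by (auto simp: T_def in_set_conv_nth n_def)
    define p where "p = (if k = 0 then n - 1 else k - 1)"
    define q where "q = (k + 1) mod n"
    have pq: "p < n" "(p + 1) mod n = k" "p \<noteq> q" using idx_prev[OF n3 k(1)] by (simp_all add: p_def q_def)
    have qn: "q < n" using n3 by (simp add: q_def)
    have e1: "{cv j, vs ! q} \<in> FE" using ed[OF k(1)] k(2) by (simp add: q_def)
    have "{vs ! p, cv j} \<in> FE" using ed[OF pq(1)] pq(2) k(2) by simp
    then have e2: "{cv j, vs ! p} \<in> FE" by (simp add: insert_commute)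
    have "vs ! q \<in> nbrs FE (cv j)" using e1 by (simp add: nbrs_def)
    then have inq: "vs ! q \<in> {cv (nxt j), cv (prv j), zv j}" unfolding nbrs_cv[OF jg] .
    have "vs ! p \<in> nbrs FE (cv j)" using e2 by (simp add: nbrs_def)
    then have inp: "vs ! p \<in> {cv (nxt j), cv (prv j), zv j}" unfolding nbrs_cv[OF jg] .
    have "vs ! q \<in> range cv" "vs ! p \<in> range cv" using sc qn pq(1) n_def by (auto simp: subset_iff)
    then have "vs ! q \<noteq> zv j" "vs ! p \<noteq> zv j" by auto
    moreover have "vs ! q \<noteq> vs ! p" using nth_eq_iff_index_eq[OF d, of q p] qn pq n_def by simp
    ultimately have "vs ! q = cv (nxt j) \<or> vs ! p = cv (nxt j)" using inq inp by auto
    then have "cv (nxt j) \<in> set vs" using qn pq(1) n_def by (metis nth_mem)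
    then show ?thesis by (simp add: T_def)
  qed
  have "0 < length vs" using n3 n_def by linarith
  then have "vs ! 0 \<in> set vs" by (rule nth_mem)
  then obtain j0 where j0: "vs ! 0 = cv j0" using sc by auto
  then have j0T: "j0 \<in> T" using \<open>vs ! 0 \<in> set vs\<close> by (simp add: T_def)
  then have j0g: "j0 < g" using Tg by auto
  have allt: "(j0 + t) mod g \<in> T" for t
  proof (induction t)
    case 0 then show ?case using j0T j0g by simp
  next
    case (Suc t)
    have "nxt ((j0 + t) mod g) \<in> T" using clos[OF Suc.IH] .
    moreover have "nxt ((j0 + t) mod g) = (j0 + Suc t) mod g"
      using g3 by (simp add: nxt_mod mod_Suc_eq)
    ultimately show ?case by simp
  qed
  have "{..<g} \<subseteq> T"
  proof
    fix j assume "j \<in> {..<g}"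
    then have "(j0 + (j + g - j0)) mod g = j" using j0g by simp
    then show "j \<in> T" using allt[of "j + g - j0"] by simp
  qed
  then have "T = {..<g}" using Tg by blast
  then have "card T = g" by simp
  moreover have "card T = card (cv ` T)" by (rule card_image[symmetric]) (simp add: inj_on_def)
  moreover have "cv ` T \<subseteq> set vs" by (auto simp: T_def)
  then have "card (cv ` T) \<le> card (set vs)" by (simp add: card_mono)
  moreover have "card (set vs) = n" using d by (simp add: distinct_card n_def)
  ultimately show ?thesis by (simp add: n_def)
qed

lemma gv_edge: "{gv i a, gv i b} \<in> FE \<Longrightarrow> {a, b} \<in> EG \<and> {a, b} \<noteq> {x, y}"
  by (auto simp: FE_iff Adj_gv_l insert_commute)

lemma gv_cycle_nz:
  assumes c: "cycle_in FV FE vs" and sc: "set vs \<subseteq> gv i ` VG"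
  shows "g \<le> length vs"
proof -
  define n where "n = length vs"
  have n3: "n \<ge> 3" and d: "distinct vs"
    and ed: "\<And>k. k < n \<Longrightarrow> {vs ! k, vs ! ((k + 1) mod n)} \<in> FE"
    using c by (auto simp: cycle_in_def n_def)
  have inj: "inj_on ungv (set vs)"
  proof (rule inj_onI)
    fix p q assume p: "p \<in> set vs" and q: "q \<in> set vs" and eq: "ungv p = ungv q"
    obtain a where a: "p = gv i a" using sc p by blast
    obtain b where b: "q = gv i b" using sc q by blast
    show "p = q" using eq a b by simp
  qed
  have "cycle_in VG EG (map ungv vs)"
    unfolding cycle_in_def
  proof (intro conjI allI impI)
    show "3 \<le> length (map ungv vs)" using n3 n_def by simp
    show "distinct (map ungv vs)" using d inj by (simp add: distinct_map)
    show "set (map ungv vs) \<subseteq> VG" using sc by auto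
  next
    fix k assume k: "k < length (map ungv vs)"
    then have k': "k < n" by (simp add: n_def)
    have q: "(k + 1) mod n < n" using n3 by simp
    have "vs ! k \<in> set vs" using k' n_def by (intro nth_mem) simp
    then obtain a where a: "vs ! k = gv i a" using sc by blast
    have "vs ! ((k + 1) mod n) \<in> set vs" using q n_def by (intro nth_mem) simp
    then obtain b where b: "vs ! ((k + 1) mod n) = gv i b" using sc by blast
    have "{a, b} \<in> EG" using ed[OF k'] a b gv_edge by simp
    then show "{map ungv vs ! k, map ungv vs ! ((k + 1) mod length (map ungv vs))} \<in> EG"
      using a b k' q n_def by simp
  qed
  then show ?thesis using cycG n_def by fastforce
qed

end



context fin begin

lemma Qi_gv: "v \<in> Qi i \<Longrightarrow> v \<noteq> zv i \<Longrightarrow> \<exists>h\<in>VG. v = gv i h"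
  by (auto simp: Qi_def)

lemma gv_cycle_z:
  assumes c: "cycle_in FV FE vs" and sq: "set vs \<subseteq> Qi i" and i: "i < g" and z: "zv i \<in> set vs"
  shows "g \<le> length vs"
proof -
  define n where "n = length vs"
  have n3: "n \<ge> 3" using c by (simp add: cycle_in_def n_def)
  obtain k where k: "k < n" "vs ! k = zv i" using z by (auto simp: in_set_conv_nth n_def)
  define ws where "ws = rotate (Suc k) vs"
  have cw: "cycle_in FV FE ws" unfolding ws_def by (rule cycle_rotate[OF c])
  have lw: "length ws = n" by (simp add: ws_def n_def)
  have sw: "set ws \<subseteq> Qi i" using sq by (simp add: ws_def)
  have dw: "distinct ws" and edw: "\<And>p. p < n \<Longrightarrow> {ws ! p, ws ! ((p + 1) mod n)} \<in> FE"
    using cw lw by (auto simp: cycle_in_def)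
  have "ws ! (n - 1) = vs ! ((Suc k + (n - 1)) mod length vs)" unfolding ws_def
    by (rule nth_rotate) (use n3 n_def in simp)
  then have "ws ! (n - 1) = vs ! ((Suc k + (n - 1)) mod n)" by (simp add: n_def)
  moreover have "(Suc k + (n - 1)) mod n = k" using n3 k(1) by simp
  ultimately have wl: "ws ! (n - 1) = zv i" using k(2) by simp
  have "{ws ! (n - 1), ws ! 0} \<in> FE" using edw[of "n - 1"] n3 by simp
  then have "ws ! 0 \<in> nbrs FE (zv i)" using wl by (simp add: nbrs_def)
  then have w0: "ws ! 0 \<in> {cv i, gv i x, gv i y}" unfolding nbrs_zv[OF i] .
  have "(n - 2 + 1) mod n = n - 1" using n3 by simp
  then have "{ws ! (n - 2), ws ! (n - 1)} \<in> FE" using edw[of "n - 2"] n3 by simp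
  then have "ws ! (n - 2) \<in> nbrs FE (zv i)" using wl by (simp add: nbrs_def insert_commute)
  then have w2: "ws ! (n - 2) \<in> {cv i, gv i x, gv i y}" unfolding nbrs_zv[OF i] .
  have m0: "ws ! 0 \<in> set ws" "ws ! (n - 2) \<in> set ws" using n3 lw by (auto intro!: nth_mem)
  then have "ws ! 0 \<noteq> cv i" "ws ! (n - 2) \<noteq> cv i" using sw by (auto simp: Qi_def)
  moreover have "ws ! 0 \<noteq> ws ! (n - 2)" using nth_eq_iff_index_eq[OF dw, of 0 "n - 2"] n3 lw by simp
  ultimately have hxy: "(ws ! 0 = gv i x \<and> ws ! (n - 2) = gv i y) \<or> (ws ! 0 = gv i y \<and> ws ! (n - 2) = gv i x)"
    using w0 w2 by auto
  have ing: "\<exists>h\<in>VG. ws ! p = gv i h" if p: "p < n - 1" for p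
  proof -
    have "ws ! p \<in> set ws" using p lw by (intro nth_mem) simp
    moreover have "ws ! p \<noteq> zv i" using nth_eq_iff_index_eq[OF dw, of p "n - 1"] p lw wl n3 by simp
    ultimately show ?thesis using sw Qi_gv by blast
  qed
  show ?thesis
  proof (cases "n = 3")
    case True
    have "{ws ! 0, ws ! 1} \<in> FE" using edw[of 0] True by simp
    then have "{ws ! 0, ws ! (n - 2)} \<in> FE" using True by simp
    then have "{gv i x, gv i y} \<in> FE \<or> {gv i y, gv i x} \<in> FE" using hxy by auto
    then show ?thesis using gv_edge by (auto simp: insert_commute)
  next
    case False
    then have n4: "n \<ge> 4" using n3 by simp
    define us where "us = map ungv (take (n - 1) ws)"
    have lu: "length us = n - 1" using lw by (simp add: us_def)
    have nth_us: "us ! p = ungv (ws ! p)" if "p < n - 1" for p using that lw by (simp add: us_def)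
    have "cycle_in VG EG us"
      unfolding cycle_in_def
    proof (intro conjI allI impI)
      show "3 \<le> length us" using lu n4 by simp
      have inj: "inj_on ungv (set (take (n - 1) ws))"
      proof (rule inj_onI)
        fix p q assume p: "p \<in> set (take (n - 1) ws)" and q: "q \<in> set (take (n - 1) ws)" and eq: "ungv p = ungv q"
        obtain a where "a < length (take (n - 1) ws)" "p = take (n - 1) ws ! a" using p by (auto simp: in_set_conv_nth)
        then have "a < n - 1" "p = ws ! a" using lw by auto
        then obtain ha where a: "p = gv i ha" using ing by blast
        obtain b where "b < length (take (n - 1) ws)" "q = take (n - 1) ws ! b" using q by (auto simp: in_set_conv_nth)
        then have "b < n - 1" "q = ws ! b" using lw by auto
        then obtain hb where b: "q = gv i hb" using ing by blast
        show "p = q" using eq a b by simp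
      qed
      show "distinct us" unfolding us_def using dw inj by (simp add: distinct_map)
      show "set us \<subseteq> VG"
      proof
        fix h assume "h \<in> set us"
        then obtain p where p: "p < n - 1" "h = us ! p" using lu by (auto simp: in_set_conv_nth)
        obtain h' where "h' \<in> VG" "ws ! p = gv i h'" using ing[OF p(1)] by blast
        then show "h \<in> VG" using p nth_us by simp
      qed
    next
      fix p assume p: "p < length us"
      then have p': "p < n - 1" using lu by simp
      show "{us ! p, us ! ((p + 1) mod length us)} \<in> EG"
      proof (cases "p = n - 2")
        case True
        have "p + 1 = length us" using True lu n4 by simp
        then have "(p + 1) mod length us = 0" by simp
        moreover have "us ! p = ungv (ws ! (n - 2))" "us ! 0 = ungv (ws ! 0)" using nth_us True n4 by auto
        ultimately show ?thesis using hxy xyE by (auto simp: insert_commute)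
      next
        case False
        then have pp: "p + 1 < n - 1" using p' by simp
        then have "(p + 1) mod length us = p + 1" "(p + 1) mod n = p + 1" using lu by auto
        moreover obtain a where a: "ws ! p = gv i a" using ing[OF p'] by blast
        moreover obtain b where b: "ws ! (p + 1) = gv i b" using ing[OF pp] by blast
        moreover have "{ws ! p, ws ! ((p + 1) mod n)} \<in> FE" using p' by (intro edw) simp
        ultimately have "{a, b} \<in> EG" "us ! p = a" "us ! ((p + 1) mod length us) = b"
          using gv_edge nth_us p' pp by auto
        then show ?thesis by simp
      qed
    qed
    then have "g \<le> length us" by (rule cycG)
    then show ?thesis using lu n_def by simp
  qed
qed

lemma no_short:
  assumes c: "cycle_in FV FE vs"
  shows "g \<le> length vs"
proof -
  define n where "n = length vs"
  have n3: "n \<ge> 3" and sv: "set vs \<subseteq> FV" using c by (auto simp: cycle_in_def n_def)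
  have crossQ: "\<And>a b. {a, b} \<in> FE \<Longrightarrow> a \<in> Qi j \<Longrightarrow> b \<notin> Qi j \<Longrightarrow> a = zv j \<and> b = cv j" if "j < g" for j
    using cross[OF _ that] by blast
  show ?thesis
  proof (cases "\<exists>k<n. vs ! k \<in> range cv")
    case True
    then obtain k where k: "k < n" "vs ! k \<in> range cv" by blast
    have notQ: "vs ! k \<notin> Qi j" for j using k(2) by (auto simp: Qi_def)
    have "set vs \<subseteq> range cv"
    proof
      fix v assume vin: "v \<in> set vs"
      then obtain m where m: "m < n" "vs ! m = v" by (auto simp: in_set_conv_nth n_def)
      have "v \<in> FV" using vin sv by blast
      then show "v \<in> range cv"
      proof (cases rule: FV_cases)
        case (C i) then show ?thesis by simp
      next
        case (Z i)
        have "vs ! m \<in> Qi i" using Z m by (simp add: Qi_def)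
        then show ?thesis using cross_cycle[where Q="Qi i" and cc="zv i" and dd="cv i" and a=m and b=k, OF c crossQ[OF Z(1)]] m k notQ n_def by blast
      next
        case (G i h)
        have "vs ! m \<in> Qi i" using G m by (simp add: Qi_def)
        then show ?thesis using cross_cycle[where Q="Qi i" and cc="zv i" and dd="cv i" and a=m and b=k, OF c crossQ[OF G(1)]] m k notQ n_def by blast
      qed
    qed
    then show ?thesis by (rule cv_cycle[OF c])
  next
    case False
    have "0 < length vs" using n3 n_def by linarith
    then have v0: "vs ! 0 \<in> set vs" by (rule nth_mem)
    then have "vs ! 0 \<in> FV" using sv by blast
    then obtain i where i: "i < g" and q0: "vs ! 0 \<in> Qi i"
    proof (cases rule: FV_cases)
      case (C i)
      then have "vs ! 0 \<in> range cv" by simp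
      moreover have "(0::nat) < n" using n3 by simp
      ultimately show ?thesis using False by blast
    next
      case (Z i) then show ?thesis using that by (simp add: Qi_def)
    next
      case (G i h) then show ?thesis using that by (simp add: Qi_def)
    qed
    have sq: "set vs \<subseteq> Qi i"
    proof
      fix v assume vin: "v \<in> set vs"
      then obtain m where m: "m < n" "vs ! m = v" by (auto simp: in_set_conv_nth n_def)
      show "v \<in> Qi i"
      proof (rule ccontr)
        assume "v \<notin> Qi i"
        moreover have "vs \<noteq> []" using n3 n_def by (cases vs) auto
        ultimately show False using cross_cycle[where Q="Qi i" and cc="zv i" and dd="cv i" and a=0 and b=m, OF c crossQ[OF i]] q0 m n3 n_def by simp
      qed
    qed
    show ?thesis
    proof (cases "zv i \<in> set vs")
      case True then show ?thesis using gv_cycle_z[OF c sq i] by simp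
    next
      case False
      have "set vs \<subseteq> gv i ` VG" using sq False by (auto simp: Qi_def)
      then show ?thesis by (rule gv_cycle_nz[OF c])
    qed
  qed
qed

lemma girth_F: "has_girth FV FE g"
  unfolding has_girth_def
proof (intro conjI allI impI)
  show "has_cycle_of_length FV FE g"
    unfolding has_cycle_of_length_def
  proof (intro conjI exI[of _ "map cv [0..<g]"])
    show "3 \<le> g" using g3 .
    show "length (map cv [0..<g]) = g" by simp
    show "distinct (map cv [0..<g])" by (simp add: distinct_map inj_on_def)
    show "set (map cv [0..<g]) \<subseteq> FV" by (auto simp: cv_in_FV)
    show "\<forall>i<g. {map cv [0..<g] ! i, map cv [0..<g] ! ((i + 1) mod g)} \<in> FE"
    proof (intro allI impI)
      fix i assume i: "i < g"
      have "(i + 1) mod g < g" using g3 by simp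
      then have "map cv [0..<g] ! ((i + 1) mod g) = cv (nxt i)" using nxt_mod[OF i] by simp
      moreover have "Adj (cv i) (cv (nxt i))" using i by (simp add: Adj_cv_l)
      ultimately show "{map cv [0..<g] ! i, map cv [0..<g] ! ((i + 1) mod g)} \<in> FE"
        using i nxt_lt[OF i] by (simp add: FE_iff)
    qed
  qed
next
  fix n assume n: "n < g"
  show "\<not> has_cycle_of_length FV FE n"
  proof
    assume "has_cycle_of_length FV FE n"
    then obtain vs where "length vs = n" "cycle_in FV FE vs"
      unfolding has_cycle_of_length_def cycle_in_def by metis
    then show False using no_short n by fastforce
  qed
qed

end

theorem mainTheorem8:
  fixes g :: nat
  assumes "g \<ge> 3"
  shows "(\<exists>(V :: nat set) E. graph V E \<and> fragile V E \<and> cubic V E \<and> has_girth V E g)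
       \<and> (\<exists>(V :: nat set) E. graph V E \<and> fragile V E \<and> has_girth V E g \<and> \<not> two_degenerate V E)"
proof -
  obtain VG :: "nat set" and EG x y where gb: "good_base g VG EG x y"
    using base_nat[of g] assms by auto
  interpret fin g VG EG x y using assms gb by unfold_locales
  have ntd: "\<not> two_degenerate FV FE"
  proof
    assume "two_degenerate FV FE"
    moreover have "subgraph FV FE FV FE" using graph_F by (simp add: subgraph_def)
    moreover have "FV \<noteq> {}" using cv_in_FV[of 0] assms by auto
    ultimately obtain v where "v \<in> FV" "degree FE v \<le> 2" unfolding two_degenerate_def by blast
    then show False using cubic_F by (simp add: cubic_def)
  qed
  show ?thesis using graph_F fragile_F cubic_F girth_F ntd by blast
qed


end
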